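(* Let $\mathbf{F}$ be a Baire foliage tree on a topological space $X$ and let $p\in X$. Then: (a) $\mathbf{F}$ is nonincreasing, $\mathrm{flesh}\,\mathbf{F}=\mathbf{F}_{0_{\mathbf{F}}}$, and the height of $\mathbf{F}$ is $\omega$; (b) for every node $v$ of $\mathbf{F}$, the leaf $\mathbf{F}_v$ is closed-and-open in $X$ and $|\mathbf{F}_v|=2^{\omega}$; (c) $\mathrm{scope}_{\mathbf{F}}(p)$ is a branch in $\mathbf{F}$; (d) for every $n\in\omega$ there is exactly one $v\in\mathrm{scope}_{\mathbf{F}}(p)$ with $\mathrm{height}_{\mathbf{F}}(v)=n$.
   Context: $\omega=\{0,1,2,\dots\}$, ${}^{<\omega}\omega$ is the set of finite sequences of natural numbers. A tree is a strict partial order $(T,<)$ in which the set of predecessors of every node is well-ordered; $\mathrm{height}_T(x)$ is the ordinal isomorphic to the set of predecessors of $x$; the height of $T$ is the least ordinal $\beta$ such that no node has height $\beta$; a branch is a $\subseteq$-maximal chain; $\mathrm{sons}_T(x)$ is the set of immediate successors of $x$; $0_T$ denotes the least node. A foliage tree is a pair $\mathbf{F}=(T,l)$ with $T$ a tree (the skeleton) and $l$ a function on the nodes of $T$; $\mathbf{F}_x:=l(x)$ is the leaf at $x$; tree notions apply to $\mathbf{F}$ via its skeleton; $\mathrm{flesh}\,\mathbf{F}=\bigcup_x\mathbf{F}_x$; $\mathrm{scope}_{\mathbf{F}}(p)=\{x:p\in\mathbf{F}_x\}$. $\mathbf{F}$ is nonincreasing if $y\geq x$ implies $\mathbf{F}_y\subseteq\mathbf{F}_x$.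 $\mathbf{F}$ is locally strict if for every non-maximal node $x$, $\mathbf{F}_x$ is the union of the pairwise disjoint sets $\mathbf{F}_s$, $s\in\mathrm{sons}(x)$; $\mathbf{F}$ has strict branches if it has at least one node and for every branch $B$, $\bigcap_{x\in B}\mathbf{F}_x$ is a singleton; $\mathbf{F}$ is open in $X$ if all leaves are open in $X$; $\mathbf{F}$ is a foliage $\omega,\omega$-tree if its skeleton is order-isomorphic to $({}^{<\omega}\omega,\subsetneq)$. A Baire foliage tree on $X$ is an open in $X$, locally strict foliage $\omega,\omega$-tree with strict branches such that $\mathbf{F}_{0_{\mathbf{F}}}=X$. *)

theory Defs
  imports "HOL-Analysis.Analysis" "HOL-Library.Sublist" "HOL-Library.Equipollence"
begin

definition is_tree :: "'n set \<Rightarrow> ('n \<Rightarrow> 'n \<Rightarrow> bool) \<Rightarrow> bool" where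
  "is_tree N lt \<longleftrightarrow>
     (\<forall>x\<in>N. \<not> lt x x) \<and>
     (\<forall>x\<in>N. \<forall>y\<in>N. \<forall>z\<in>N. lt x y \<longrightarrow> lt y z \<longrightarrow> lt x z) \<and>
     (\<forall>x\<in>N. let P = {y\<in>N. lt y x} in
        (\<forall>a\<in>P. \<forall>b\<in>P. a = b \<or> lt a b \<or> lt b a) \<and>
        wf {(a, b). a \<in> P \<and> b \<in> P \<and> lt a b})"

definition preds :: "'n set \<Rightarrow> ('n \<Rightarrow> 'n \<Rightarrow> bool) \<Rightarrow> 'n \<Rightarrow> 'n set" where
  "preds N lt x = {y\<in>N. lt y x}"

text \<open>Height of a node whose predecessor set is finite (the finite ordinal = its cardinality).\<close>
definition node_height :: "'n set \<Rightarrow> ('n \<Rightarrow> 'n \<Rightarrow> bool) \<Rightarrow> 'n \<Rightarrow> nat" where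
  "node_height N lt x = card (preds N lt x)"

text \<open>The height of the tree (least ordinal that is not the height of a node) equals omega:
  every node has finite height and every natural number is the height of some node.\<close>
definition tree_height_omega :: "'n set \<Rightarrow> ('n \<Rightarrow> 'n \<Rightarrow> bool) \<Rightarrow> bool" where
  "tree_height_omega N lt \<longleftrightarrow>
     (\<forall>x\<in>N. finite (preds N lt x)) \<and> (\<forall>n::nat. \<exists>x\<in>N. node_height N lt x = n)"

definition tree_root :: "'n set \<Rightarrow> ('n \<Rightarrow> 'n \<Rightarrow> bool) \<Rightarrow> 'n" where
  "tree_root N lt = (THE r. r \<in> N \<and> (\<forall>x\<in>N. x \<noteq> r \<longrightarrow> lt r x))"

definition sons :: "'n set \<Rightarrow> ('n \<Rightarrow> 'n \<Rightarrow> bool) \<Rightarrow> 'n \<Rightarrow> 'n set" where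
  "sons N lt x = {y\<in>N. lt x y \<and> \<not> (\<exists>z\<in>N. lt x z \<and> lt z y)}"

definition is_maximal_node :: "'n set \<Rightarrow> ('n \<Rightarrow> 'n \<Rightarrow> bool) \<Rightarrow> 'n \<Rightarrow> bool" where
  "is_maximal_node N lt x \<longleftrightarrow> \<not> (\<exists>y\<in>N. lt x y)"

definition is_chain :: "'n set \<Rightarrow> ('n \<Rightarrow> 'n \<Rightarrow> bool) \<Rightarrow> 'n set \<Rightarrow> bool" where
  "is_chain N lt C \<longleftrightarrow> C \<subseteq> N \<and> (\<forall>x\<in>C. \<forall>y\<in>C. x = y \<or> lt x y \<or> lt y x)"

definition is_branch :: "'n set \<Rightarrow> ('n \<Rightarrow> 'n \<Rightarrow> bool) \<Rightarrow> 'n set \<Rightarrow> bool" where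
  "is_branch N lt B \<longleftrightarrow> is_chain N lt B \<and> (\<forall>C. is_chain N lt C \<and> B \<subseteq> C \<longrightarrow> C = B)"

definition flesh :: "'n set \<Rightarrow> ('n \<Rightarrow> 'a set) \<Rightarrow> 'a set" where
  "flesh N l = (\<Union>x\<in>N. l x)"

definition scope :: "'n set \<Rightarrow> ('n \<Rightarrow> 'a set) \<Rightarrow> 'a \<Rightarrow> 'n set" where
  "scope N l p = {x\<in>N. p \<in> l x}"

definition nonincreasing :: "'n set \<Rightarrow> ('n \<Rightarrow> 'n \<Rightarrow> bool) \<Rightarrow> ('n \<Rightarrow> 'a set) \<Rightarrow> bool" where
  "nonincreasing N lt l \<longleftrightarrow> (\<forall>x\<in>N. \<forall>y\<in>N. (y = x \<or> lt x y) \<longrightarrow> l y \<subseteq> l x)"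

definition locally_strict :: "'n set \<Rightarrow> ('n \<Rightarrow> 'n \<Rightarrow> bool) \<Rightarrow> ('n \<Rightarrow> 'a set) \<Rightarrow> bool" where
  "locally_strict N lt l \<longleftrightarrow>
     (\<forall>x\<in>N. \<not> is_maximal_node N lt x \<longrightarrow>
        l x = (\<Union>s\<in>sons N lt x. l s) \<and> disjoint_family_on l (sons N lt x))"

definition strict_branches :: "'n set \<Rightarrow> ('n \<Rightarrow> 'n \<Rightarrow> bool) \<Rightarrow> ('n \<Rightarrow> 'a set) \<Rightarrow> bool" where
  "strict_branches N lt l \<longleftrightarrow> N \<noteq> {} \<and>
     (\<forall>B. is_branch N lt B \<longrightarrow> (\<exists>p. (\<Inter>x\<in>B. l x) = {p}))"

definition open_foliage :: "'a topology \<Rightarrow> 'n set \<Rightarrow> ('n \<Rightarrow> 'a set) \<Rightarrow> bool" where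
  "open_foliage X N l \<longleftrightarrow> (\<forall>x\<in>N. openin X (l x))"

definition omega_omega_tree :: "'n set \<Rightarrow> ('n \<Rightarrow> 'n \<Rightarrow> bool) \<Rightarrow> bool" where
  "omega_omega_tree N lt \<longleftrightarrow>
     (\<exists>f. bij_betw f N (UNIV :: nat list set) \<and>
          (\<forall>x\<in>N. \<forall>y\<in>N. lt x y \<longleftrightarrow> strict_prefix (f x) (f y)))"

definition baire_foliage_tree ::
  "'a topology \<Rightarrow> 'n set \<Rightarrow> ('n \<Rightarrow> 'n \<Rightarrow> bool) \<Rightarrow> ('n \<Rightarrow> 'a set) \<Rightarrow> bool" where
  "baire_foliage_tree X N lt l \<longleftrightarrow>
     is_tree N lt \<and> omega_omega_tree N lt \<and> open_foliage X N l \<and>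
     locally_strict N lt l \<and> strict_branches N lt l \<and>
     l (tree_root N lt) = topspace X"

end

theory Submission
  imports Defs "HOL-Library.Countable"
begin

lemma sp_snoc[simp]: "strict_prefix s (s @ [k])"
  by (simp add: strict_prefix_def)

lemma sp_nil: "s \<noteq> [] \<Longrightarrow> strict_prefix [] s"
  by (simp add: strict_prefix_def)

lemma between_sons:
  fixes s t :: "'b list"
  shows "(strict_prefix s t \<and> \<not> (\<exists>u. strict_prefix s u \<and> strict_prefix u t)) \<longleftrightarrow> (\<exists>k. t = s @ [k])"
proof
  assume a: "strict_prefix s t \<and> \<not> (\<exists>u. strict_prefix s u \<and> strict_prefix u t)"
  then obtain c where c: "t = s @ c" "c \<noteq> []" by (auto elim: strict_prefixE')
  then obtain k c' where kc: "c = k # c'" by (cases c) auto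
  show "\<exists>k. t = s @ [k]"
  proof (cases "c' = []")
    case True then show ?thesis using c kc by auto
  next
    case False
    have "strict_prefix s (s @ [k])" by simp
    moreover have "strict_prefix (s @ [k]) t" using c kc False
      by (simp add: strict_prefix_def)
    ultimately show ?thesis using a by blast
  qed
next
  assume "\<exists>k. t = s @ [k]"
  then obtain k where t: "t = s @ [k]" by blast
  have "\<not> (strict_prefix s u \<and> strict_prefix u t)" for u
    using prefix_length_less[of s u] prefix_length_less[of u t] t by auto
  then show "strict_prefix s t \<and> \<not> (\<exists>u. strict_prefix s u \<and> strict_prefix u t)"
    using t by auto
qed

lemma map_upt_prefix:
  "m \<le> n \<Longrightarrow> prefix (map \<beta> [0..<m]) (map \<beta> [0..<n])"
proof -
  assume "m \<le> n"
  then have "[0..<n] = [0..<m] @ [m..<n]" by (metis le0 upt_add_eq_append le_add_diff_inverse)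
  then show ?thesis by simp
qed

lemma same_len_parallel:
  "length s = length t \<Longrightarrow> s \<noteq> t \<Longrightarrow> s \<parallel> t"
proof (rule parallelI)
  assume l: "length s = length t" and ne: "s \<noteq> t"
  show "\<not> prefix s t"
  proof
    assume "prefix s t"
    then obtain c where "t = s @ c" by (auto elim: prefixE)
    then show False using l ne by simp
  qed
  show "\<not> prefix t s"
  proof
    assume "prefix t s"
    then obtain c where "s = t @ c" by (auto elim: prefixE)
    then show False using l ne by simp
  qed
qed

context
  fixes X :: "'a topology" and N :: "'n set" and lt :: "'n \<Rightarrow> 'n \<Rightarrow> bool"
    and l :: "'n \<Rightarrow> 'a set" and f :: "'n \<Rightarrow> nat list"
  assumes bij: "bij_betw f N UNIV"
    and ord: "\<forall>x\<in>N. \<forall>y\<in>N. lt x y \<longleftrightarrow> strict_prefix (f x) (f y)"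
    and opn: "open_foliage X N l"
    and ls: "locally_strict N lt l"
    and sb: "strict_branches N lt l"
    and rt: "l (tree_root N lt) = topspace X"
begin

abbreviation g where "g \<equiv> inv_into N f"
abbreviation L where "L s \<equiv> l (g s)"

lemma g_in: "g s \<in> N"
  using bij by (simp add: bij_betw_def inv_into_into)

lemma f_g: "f (g s) = s"
  using bij by (simp add: bij_betw_def f_inv_into_f)

lemma g_f: "x \<in> N \<Longrightarrow> g (f x) = x"
  using bij by (simp add: bij_betw_def)

lemma lt_g: "lt (g s) (g t) \<longleftrightarrow> strict_prefix s t"
  using ord g_in f_g by metis

lemma allN: "(\<forall>x\<in>N. P x) \<longleftrightarrow> (\<forall>s. P (g s))"
  using g_in g_f by metis

lemma exN: "(\<exists>x\<in>N. P x) \<longleftrightarrow> (\<exists>s. P (g s))"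
  using g_in g_f by metis

lemma g_inj: "g s = g t \<longleftrightarrow> s = t"
  using f_g by metis

lemma root: "tree_root N lt = g []"
  unfolding tree_root_def
proof (rule the_equality)
  show "g [] \<in> N \<and> (\<forall>x\<in>N. x \<noteq> g [] \<longrightarrow> lt (g []) x)"
    by (auto simp: allN g_in lt_g g_inj sp_nil)
next
  fix r assume r: "r \<in> N \<and> (\<forall>x\<in>N. x \<noteq> r \<longrightarrow> lt r x)"
  have "r = g [] \<or> lt r (g [])" using r g_in[of "[]"] by (cases "r = g []") auto
  then show "r = g []" using r g_f[of r] lt_g[of "f r" "[]"] by auto
qed

lemma sons_g: "sons N lt (g s) = range (\<lambda>k. g (s @ [k]))"
proof -
  have "sons N lt (g s) = {y\<in>N. lt (g s) y \<and> \<not> (\<exists>z\<in>N. lt (g s) z \<and> lt z y)}"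
    by (simp add: sons_def)
  also have "\<dots> = g ` {t. strict_prefix s t \<and> \<not> (\<exists>u. strict_prefix s u \<and> strict_prefix u t)}"
    apply (rule set_eqI)
    apply (simp add: image_iff exN lt_g)
    by (metis g_f g_in lt_g)
  also have "\<dots> = g ` {t. \<exists>k. t = s @ [k]}" using between_sons[of s] by presburger
  finally show ?thesis by auto
qed

lemma L_split: "L s = (\<Union>k. L (s @ [k]))"
proof -
  have nm: "\<not> is_maximal_node N lt (g s)"
    unfolding is_maximal_node_def using g_in[of "s @ [0]"] lt_g[of s "s @ [0]"] by auto
  then have "l (g s) = (\<Union>x\<in>sons N lt (g s). l x)" using ls g_in[of s] unfolding locally_strict_def by blast
  then show ?thesis unfolding sons_g by (simp add: image_image)
qed

lemma L_disj: "k \<noteq> k' \<Longrightarrow> L (s @ [k]) \<inter> L (s @ [k']) = {}"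
proof -
  assume kk: "k \<noteq> k'"
  have nm: "\<not> is_maximal_node N lt (g s)"
    unfolding is_maximal_node_def using g_in[of "s @ [0]"] lt_g[of s "s @ [0]"] by auto
  then have "disjoint_family_on l (sons N lt (g s))"
    using ls g_in[of s] unfolding locally_strict_def by blast
  then have "disjoint_family_on l (range (\<lambda>k. g (s @ [k])))" unfolding sons_g .
  moreover have "g (s @ [k]) \<noteq> g (s @ [k'])" using kk g_inj by simp
  ultimately show ?thesis unfolding disjoint_family_on_def by blast
qed

lemma L_root: "L [] = topspace X"
  using rt root by simp

lemma L_open: "openin X (L s)"
  using opn g_in unfolding open_foliage_def by blast

lemma L_sub: "L s \<subseteq> topspace X"
  using L_open openin_subset by blast

lemma L_mono_app: "L (s @ t) \<subseteq> L s"
proof (induction t rule: rev_induct)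
  case Nil then show ?case by simp
next
  case (snoc x xs)
  have "L (s @ xs @ [x]) \<subseteq> L (s @ xs)" using L_split[of "s @ xs"] by auto
  then show ?case using snoc by simp
qed

lemma L_mono: "prefix s t \<Longrightarrow> L t \<subseteq> L s"
  using L_mono_app by (auto elim: prefixE)

lemma L_par: "s \<parallel> t \<Longrightarrow> L s \<inter> L t = {}"
proof -
  assume "s \<parallel> t"
  then obtain as b bs c cs where d: "b \<noteq> c" "s = as @ b # bs" "t = as @ c # cs"
    using parallel_decomp by blast
  have "L s \<subseteq> L (as @ [b])" using L_mono[of "as @ [b]" s] d by simp
  moreover have "L t \<subseteq> L (as @ [c])" using L_mono[of "as @ [c]" t] d by simp
  ultimately show ?thesis using L_disj[OF d(1)] by blast
qed

lemma cover: "p \<in> topspace X \<Longrightarrow> \<exists>s. length s = n \<and> p \<in> L s"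
proof (induction n)
  case 0 then show ?case using L_root by auto
next
  case (Suc n)
  then obtain s where "length s = n" "p \<in> L s" by blast
  then obtain k where "p \<in> L (s @ [k])" using L_split[of s] by auto
  then show ?case using \<open>length s = n\<close> by (intro exI[of _ "s @ [k]"]) simp
qed

lemma scope_eq: "scope N l p = g ` {s. p \<in> L s}"
  unfolding scope_def by (auto simp: image_iff) (metis g_f, metis g_in)

lemma L_cases: "p \<in> L s \<Longrightarrow> p \<in> L t \<Longrightarrow> s = t \<or> strict_prefix s t \<or> strict_prefix t s"
  using L_par[of s t] by (auto simp: strict_prefix_def)

lemma scope_branch: "p \<in> topspace X \<Longrightarrow> is_branch N lt (scope N l p)"
proof -
  assume p: "p \<in> topspace X"
  have ch: "is_chain N lt (scope N l p)"
    unfolding is_chain_def scope_eq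
    using L_cases lt_g g_in by fastforce
  have mx: "C = scope N l p" if C: "is_chain N lt C" "scope N l p \<subseteq> C" for C
  proof
    show "C \<subseteq> scope N l p"
    proof
      fix x assume x: "x \<in> C"
      then have xN: "x \<in> N" using C unfolding is_chain_def by blast
      obtain t where t: "length t = length (f x)" "p \<in> L t" using cover[OF p] by blast
      have gt: "g t \<in> C" using C(2) t(2) unfolding scope_eq by blast
      have "x = g t \<or> lt x (g t) \<or> lt (g t) x" using C(1) x gt unfolding is_chain_def by blast
      then have "x = g t"
        using g_f[OF xN] lt_g[of "f x" t] lt_g[of t "f x"] prefix_length_less t(1) by fastforce
      then show "x \<in> scope N l p" using t(2) unfolding scope_eq by blast
    qed
  qed (use C in blast)
  show ?thesis using ch mx unfolding is_branch_def by blast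
qed

lemma branch_seq: "is_branch N lt (g ` range (\<lambda>n. map \<beta> [0..<n]))"
proof -
  let ?B = "g ` range (\<lambda>n. map \<beta> [0..<n])"
  have ch: "is_chain N lt ?B"
    unfolding is_chain_def
  proof (intro conjI ballI)
    show "?B \<subseteq> N" using g_in by blast
  next
    fix x y assume "x \<in> ?B" "y \<in> ?B"
    then obtain m n where xy: "x = g (map \<beta> [0..<m])" "y = g (map \<beta> [0..<n])" by blast
    show "x = y \<or> lt x y \<or> lt y x"
    proof (cases m n rule: linorder_cases)
      case less then have "strict_prefix (map \<beta> [0..<m]) (map \<beta> [0..<n])"
        proof -
        have "length (map \<beta> [0..<m]) \<noteq> length (map \<beta> [0..<n])" using less by simp
        then have "map \<beta> [0..<m] \<noteq> map \<beta> [0..<n]" by metis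
        then show ?thesis using map_upt_prefix[of m n \<beta>] \<open>m < n\<close> unfolding strict_prefix_def by simp
      qed
      then show ?thesis using xy lt_g by blast
    next
      case greater then have "strict_prefix (map \<beta> [0..<n]) (map \<beta> [0..<m])"
        proof -
        have "length (map \<beta> [0..<n]) \<noteq> length (map \<beta> [0..<m])" using greater by simp
        then have "map \<beta> [0..<n] \<noteq> map \<beta> [0..<m]" by metis
        then show ?thesis using map_upt_prefix[of n m \<beta>] \<open>n < m\<close> unfolding strict_prefix_def by simp
      qed
      then show ?thesis using xy lt_g by blast
    qed (use xy in simp)
  qed
  have mx: "C = ?B" if C: "is_chain N lt C" "?B \<subseteq> C" for C
  proof
    show "C \<subseteq> ?B"
    proof
      fix x assume x: "x \<in> C"
      then have xN: "x \<in> N" using C unfolding is_chain_def by blast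
      define t where "t = map \<beta> [0..<Suc (length (f x))]"
      have gt: "g t \<in> C" using C(2) unfolding t_def by blast
      have "x = g t \<or> lt x (g t) \<or> lt (g t) x" using C(1) x gt unfolding is_chain_def by blast
      moreover have "x \<noteq> g t" using g_f[OF xN] f_g[of t] unfolding t_def by (metis length_map length_upt diff_zero n_not_Suc_n)
      moreover have "\<not> lt (g t) x" using g_f[OF xN] lt_g[of t "f x"] prefix_length_less[of t "f x"] unfolding t_def by force
      ultimately have "strict_prefix (f x) t" using g_f[OF xN] lt_g[of "f x" t] by force
      then have "f x = take (length (f x)) t" by (metis prefix_def strict_prefix_def append_eq_conv_conj)
      also have "\<dots> = map \<beta> [0..<length (f x)]" unfolding t_def by (simp add: take_map)
      finally have "x = g (map \<beta> [0..<length (f x)])" using g_f[OF xN] by metis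
      then show "x \<in> ?B" by blast
    qed
  qed (use C in blast)
  show ?thesis using ch mx unfolding is_branch_def by blast
qed

lemma pt_ex: "\<exists>r. (\<Inter>n. L (map \<beta> [0..<n])) = {r}"
proof -
  obtain r where "(\<Inter>x\<in>g ` range (\<lambda>n. map \<beta> [0..<n]). l x) = {r}"
    using sb branch_seq[of \<beta>] unfolding strict_branches_def by blast
  then show ?thesis by (auto simp: image_image)
qed

definition pt :: "(nat \<Rightarrow> nat) \<Rightarrow> 'a" where
  "pt \<beta> = (THE r. (\<Inter>n. L (map \<beta> [0..<n])) = {r})"

lemma pt_in: "pt \<beta> \<in> L (map \<beta> [0..<n])"
proof -
  obtain r where r: "(\<Inter>n. L (map \<beta> [0..<n])) = {r}" using pt_ex by blast
  then have "pt \<beta> = r" unfolding pt_def by (rule the_equality) (use r in auto)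
  then show ?thesis using r by auto
qed

lemma L_closed: "closedin X (L s)"
proof -
  have "topspace X - L s = (\<Union>t\<in>{t. length t = length s \<and> t \<noteq> s}. L t)"
  proof
    show "topspace X - L s \<subseteq> (\<Union>t\<in>{t. length t = length s \<and> t \<noteq> s}. L t)"
    proof
      fix q assume q: "q \<in> topspace X - L s"
      then obtain t where t: "length t = length s" "q \<in> L t" using cover[of q "length s"] by blast
      then have "t \<noteq> s" using q by blast
      then show "q \<in> (\<Union>t\<in>{t. length t = length s \<and> t \<noteq> s}. L t)" using t by blast
    qed
    show "(\<Union>t\<in>{t. length t = length s \<and> t \<noteq> s}. L t) \<subseteq> topspace X - L s"
    proof
      fix q assume "q \<in> (\<Union>t\<in>{t. length t = length s \<and> t \<noteq> s}. L t)"
      then obtain t where t: "length t = length s" "t \<noteq> s" "q \<in> L t" by blast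
      have "L t \<inter> L s = {}" by (rule L_par, rule same_len_parallel) (use t in auto)
      moreover have "q \<in> topspace X" using t(3) L_sub by blast
      ultimately show "q \<in> topspace X - L s" using t(3) by blast
    qed
  qed
  moreover have "openin X (\<Union>t\<in>{t. length t = length s \<and> t \<noteq> s}. L t)"
    using L_open by blast
  ultimately show ?thesis unfolding closedin_def using L_sub by simp
qed

lemma sp_take: "strict_prefix t s \<longleftrightarrow> (\<exists>i<length s. t = take i s)"
proof
  assume a: "strict_prefix t s"
  then obtain c where c: "s = t @ c" by (auto simp: strict_prefix_def elim: prefixE)
  have "length t < length s" using a by (rule prefix_length_less)
  moreover have "t = take (length t) s" using c by simp
  ultimately show "\<exists>i<length s. t = take i s" by blast
next
  assume "\<exists>i<length s. t = take i s"
  then obtain i where i: "i < length s" "t = take i s" by blast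
  have "prefix t s" using i(2) take_is_prefix by simp
  moreover have "length t \<noteq> length s" using i by simp
  ultimately show "strict_prefix t s" unfolding strict_prefix_def by blast
qed

lemma preds_g: "preds N lt (g s) = (\<lambda>i. g (take i s)) ` {..<length s}"
proof
  show "preds N lt (g s) \<subseteq> (\<lambda>i. g (take i s)) ` {..<length s}"
  proof
    fix y assume "y \<in> preds N lt (g s)"
    then have y: "y \<in> N" "lt y (g s)" unfolding preds_def by auto
    then have "lt (g (f y)) (g s)" using g_f by simp
    then have "strict_prefix (f y) s" by (simp only: lt_g)
    then obtain i where i: "i < length s" "f y = take i s" using sp_take by blast
    have "y = g (take i s)" using i(2) g_f[OF y(1)] by simp
    then show "y \<in> (\<lambda>i. g (take i s)) ` {..<length s}" using i(1) by blast
  qed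
  show "(\<lambda>i. g (take i s)) ` {..<length s} \<subseteq> preds N lt (g s)"
  proof
    fix y assume "y \<in> (\<lambda>i. g (take i s)) ` {..<length s}"
    then obtain i where i: "i < length s" "y = g (take i s)" by blast
    have "strict_prefix (take i s) s" using sp_take i(1) by blast
    then have "lt (g (take i s)) (g s)" by (simp only: lt_g)
    then show "y \<in> preds N lt (g s)" unfolding preds_def using i(2) g_in by simp
  qed
qed

lemma height_g: "node_height N lt (g s) = length s"
proof -
  have "inj_on (\<lambda>i. g (take i s)) {..<length s}"
  proof (rule inj_onI)
    fix i j assume ij: "i \<in> {..<length s}" "j \<in> {..<length s}" "g (take i s) = g (take j s)"
    then have "take i s = take j s" by (simp only: g_inj)
    then have "length (take i s) = length (take j s)" by simp
    then show "i = j" using ij(1,2) by simp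
  qed
  then show ?thesis unfolding node_height_def preds_g by (simp add: card_image)
qed

lemma L_card: "L s \<approx> (UNIV :: nat set set)"
proof (rule lepoll_antisym)
  show "L s \<lesssim> (UNIV :: nat set set)"
    unfolding lepoll_def
  proof (intro exI conjI)
    show "inj_on (\<lambda>q. to_nat ` f ` scope N l q) (L s)"
    proof (rule inj_onI)
      fix q q' assume q: "q \<in> L s" "q' \<in> L s" and e: "to_nat ` f ` scope N l q = to_nat ` f ` scope N l q'"
      have fe: "f ` scope N l q = f ` scope N l q'" using e by (simp only: inj_image_eq_iff[OF inj_to_nat])
      have injf: "inj_on f N" using bij by (simp add: bij_betw_def)
      have sub: "scope N l q \<subseteq> N" "scope N l q' \<subseteq> N" by (auto simp: scope_def)
      have sc: "scope N l q = scope N l q'"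
        using fe inj_on_image_eq_iff[OF injf sub] by simp
      have qt: "q \<in> topspace X" using q L_sub by blast
      obtain r where r: "(\<Inter>x\<in>scope N l q. l x) = {r}"
        using sb scope_branch[OF qt] unfolding strict_branches_def by blast
      have "q \<in> (\<Inter>x\<in>scope N l q. l x)" unfolding scope_def by blast
      then have "q \<in> {r}" by (simp only: r)
      moreover have "q' \<in> (\<Inter>x\<in>scope N l q'. l x)" unfolding scope_def by blast
      then have "q' \<in> {r}" by (simp only: r sc[symmetric])
      ultimately show "q = q'" by simp
    qed
  qed simp
next
  define bA where "bA A i = (if i < length s then s ! i else if i - length s \<in> A then 1 else (0::nat))" for A :: "nat set" and i
  have ms: "map (bA A) [0..<length s] = s" for A
  proof (rule nth_equalityI)
    show "length (map (bA A) [0..<length s]) = length s" by simp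
  next
    fix k assume "k < length (map (bA A) [0..<length s])"
    then have k: "k < length s" by simp
    then have "map (bA A) [0..<length s] ! k = bA A k" by simp
    also have "\<dots> = s ! k" using k by (simp add: bA_def)
    finally show "map (bA A) [0..<length s] ! k = s ! k" .
  qed
  show "(UNIV :: nat set set) \<lesssim> L s"
    unfolding lepoll_def
  proof (intro exI conjI)
    show "(\<lambda>A. pt (bA A)) ` UNIV \<subseteq> L s"
    proof clarify
      fix A
      have "pt (bA A) \<in> L (map (bA A) [0..<length s])" by (rule pt_in)
      then show "pt (bA A) \<in> L s" by (simp only: ms)
    qed
    show "inj_on (\<lambda>A. pt (bA A)) UNIV"
    proof (rule inj_onI, rule ccontr)
      fix A B assume e: "pt (bA A) = pt (bA B)" and ne: "A \<noteq> B"
      from ne obtain j where j: "(j \<in> A) \<noteq> (j \<in> B)" by (auto simp: set_eq_iff)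
      define i where "i = length s + j"
      have d: "bA A i \<noteq> bA B i" using j unfolding i_def bA_def by auto
      let ?u = "map (bA A) [0..<Suc i]" and ?v = "map (bA B) [0..<Suc i]"
      have ui: "?u ! i = bA A i" by (simp only: nth_map length_upt nth_upt) simp
      have vi: "?v ! i = bA B i" by (simp only: nth_map length_upt nth_upt) simp
      have "?u \<noteq> ?v" using d ui vi by metis
      moreover have "length ?u = length ?v" by (simp only: length_map)
      ultimately have "?u \<parallel> ?v" using same_len_parallel by blast
      then have "L ?u \<inter> L ?v = {}" by (rule L_par)
      moreover have "pt (bA A) \<in> L ?u" by (rule pt_in)
      moreover have "pt (bA B) \<in> L ?v" by (rule pt_in)
      then have "pt (bA A) \<in> L ?v" by (simp only: e)
      ultimately show False by blast
    qed
  qed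
qed

end


theorem corollary5:
  fixes X :: "'a topology" and N :: "'n set" and lt :: "'n \<Rightarrow> 'n \<Rightarrow> bool"
    and l :: "'n \<Rightarrow> 'a set" and p :: 'a
  assumes "baire_foliage_tree X N lt l" and "p \<in> topspace X"
  shows "(nonincreasing N lt l \<and> flesh N l = l (tree_root N lt) \<and> tree_height_omega N lt)
       \<and> (\<forall>v\<in>N. closedin X (l v) \<and> openin X (l v) \<and> l v \<approx> (UNIV :: nat set set))
       \<and> is_branch N lt (scope N l p)
       \<and> (\<forall>n::nat. \<exists>!v. v \<in> scope N l p \<and> node_height N lt v = n)"
proof -
  have oo: "omega_omega_tree N lt" and opn: "open_foliage X N l" and ls: "locally_strict N lt l"
    and sb: "strict_branches N lt l" and rt: "l (tree_root N lt) = topspace X"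
    using assms(1) unfolding baire_foliage_tree_def by auto
  obtain f where bij: "bij_betw f N (UNIV :: nat list set)"
    and ord: "\<forall>x\<in>N. \<forall>y\<in>N. lt x y \<longleftrightarrow> strict_prefix (f x) (f y)"
    using oo unfolding omega_omega_tree_def by blast
  note F = bij ord opn ls sb rt
  let ?g = "inv_into N f"
  have gf: "x \<in> N \<Longrightarrow> ?g (f x) = x" for x using g_f[OF F] .
  have gin: "?g s \<in> N" for s using g_in[OF F] .
  have rootg: "tree_root N lt = ?g []" using root[OF F] .
  have ni: "nonincreasing N lt l"
    unfolding nonincreasing_def
  proof (intro ballI impI)
    fix x y assume xy: "x \<in> N" "y \<in> N" "y = x \<or> lt x y"
    have "prefix (f x) (f y)"
    proof (cases "y = x")
      case True then show ?thesis by simp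
    next
      case False then have "lt x y" using xy(3) by blast
      then have "strict_prefix (f x) (f y)" using ord xy(1,2) by blast
      then show ?thesis by (simp add: strict_prefix_def)
    qed
    then have "l (?g (f y)) \<subseteq> l (?g (f x))" by (rule L_mono[OF F])
    then show "l y \<subseteq> l x" using gf[OF xy(1)] gf[OF xy(2)] by simp
  qed
  have fl: "flesh N l = l (tree_root N lt)"
  proof
    show "flesh N l \<subseteq> l (tree_root N lt)"
      unfolding flesh_def rootg
    proof (rule UN_least)
      fix x assume x: "x \<in> N"
      have "l (?g (f x)) \<subseteq> l (?g [])" by (rule L_mono[OF F]) simp
      then show "l x \<subseteq> l (?g [])" using gf[OF x] by simp
    qed
    show "l (tree_root N lt) \<subseteq> flesh N l" unfolding flesh_def rootg using gin by blast
  qed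
  have th: "tree_height_omega N lt"
    unfolding tree_height_omega_def
  proof (intro conjI allI ballI)
    fix x assume "x \<in> N"
    then show "finite (preds N lt x)" using preds_g[OF F, of "f x"] gf by simp
  next
    fix n show "\<exists>x\<in>N. node_height N lt x = n"
      using height_g[OF F, of "replicate n 0"] gin by fastforce
  qed
  have b: "\<forall>v\<in>N. closedin X (l v) \<and> openin X (l v) \<and> l v \<approx> (UNIV :: nat set set)"
  proof
    fix v assume v: "v \<in> N"
    have "closedin X (l (?g (f v))) \<and> openin X (l (?g (f v))) \<and> l (?g (f v)) \<approx> (UNIV :: nat set set)"
      using L_closed[OF F, of "f v"] L_open[OF F, of "f v"] L_card[OF F, of "f v"] by blast
    then show "closedin X (l v) \<and> openin X (l v) \<and> l v \<approx> (UNIV :: nat set set)" using gf[OF v] by simp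
  qed
  have c: "is_branch N lt (scope N l p)" using scope_branch[OF F assms(2)] .
  have d: "\<exists>!v. v \<in> scope N l p \<and> node_height N lt v = n" for n
  proof -
    obtain s where s: "length s = n" "p \<in> l (?g s)" using cover[OF F assms(2)] by blast
    show ?thesis
    proof (rule ex1I)
      show "?g s \<in> scope N l p \<and> node_height N lt (?g s) = n"
        using s gin height_g[OF F] unfolding scope_def by simp
    next
      fix w assume w: "w \<in> scope N l p \<and> node_height N lt w = n"
      then have wN: "w \<in> N" "p \<in> l (?g (f w))" using gf unfolding scope_def by auto
      have lw: "length (f w) = n" using w height_g[OF F, of "f w"] gf[OF wN(1)] by simp
      have "f w = s \<or> strict_prefix (f w) s \<or> strict_prefix s (f w)"
        using L_cases[OF F wN(2) s(2)] .
      then have "f w = s" using lw s(1) prefix_length_less by fastforce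
      then show "w = ?g s" using gf[OF wN(1)] by simp
    qed
  qed
  show ?thesis using ni fl th b c d by blast
qed

end
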